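(* Let $M\ge 1$ and $K\ge 1$ be integers and $\rho>0$. Let $\mathbf{h}_1,\ldots,\mathbf{h}_K$ be i.i.d. random vectors with $\mathbf{h}_k\sim\mathcal{CN}(\mathbf{0},\mathbf{I}_M)$, so that each $X_k=\|\mathbf{h}_k\|^2$ has CDF $F_X(x)=1-\Gamma(M,x)/\Gamma(M)$ for $x\ge 0$. Let $\gamma=\rho\min_{1\le k\le K}X_k$ and $g(\gamma)=1+\gamma$, and define the Mellin transform $\mathcal{M}_{g(\gamma)}(s)=\mathbb{E}\left[g(\gamma)^{s-1}\right]=\int_0^\infty(1+\rho x)^{s-1}\,\mathrm{d}F_{X_{(1)}}(x)$, where $X_{(1)}=\min_{1\le k\le K}X_k$. Then for $s<1$, $$\mathcal{M}_{g(\gamma)}(s)=1+(s-1)\sum_{k_1+\cdots+k_M=K}\frac{\varphi\,\Gamma(1+\vartheta)}{\rho^{\vartheta}}\,U\!\left(\vartheta+1,\ \vartheta+s,\ K/\rho\right),$$ where the sum runs over all $M$-tuples $(k_1,\ldots,k_M)$ of nonnegative integers with $k_1+\cdots+k_M=K$, and for each such tuple $$\varphi=\frac{\binom{K}{k_1,k_2,\ldots,k_M}}{\prod_{n=0}^{M-1}(n!)^{k_{n+1}}},\qquad \vartheta=\sum_{\ell=0}^{M-1}\ell\, k_{\ell+1}.$$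
   Context: $\Gamma(a,x)=\int_x^\infty t^{a-1}e^{-t}\,\mathrm{d}t$ is the upper incomplete gamma function and $\Gamma(a)=\Gamma(a,0)$. $\binom{K}{k_1,\ldots,k_M}=\frac{K!}{k_1!\cdots k_M!}$ is the multinomial coefficient. $U(a,b,z)$ denotes Tricomi's confluent hypergeometric function of the second kind (also written $\Psi(a;b;z)$), which for $a>0$, $z>0$ has the integral representation $U(a,b,z)=\frac{1}{\Gamma(a)}\int_0^\infty e^{-zt}t^{a-1}(1+t)^{b-a-1}\,\mathrm{d}t$. The notation $\mathcal{CN}(\mathbf{0},\mathbf{I}_M)$ denotes a circularly symmetric complex Gaussian vector in $\mathbb{C}^M$ with identity covariance. *)

theory Defs
  imports "HOL-Probability.Probability"
begin

text \<open>Tricomi's confluent hypergeometric function of the second kind, via its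
  integral representation (valid for a > 0, z > 0, which is the only range used).\<close>
definition tricomi_U :: "real \<Rightarrow> real \<Rightarrow> real \<Rightarrow> real" where
  "tricomi_U a b z = (1 / Gamma a) *
     (LBINT t:{0<..}. exp (- z * t) * t powr (a - 1) * (1 + t) powr (b - a - 1))"

text \<open>Multinomial coefficient K! / (k_1! ... k_M!), with the tuple given as
  k 0, ..., k (M-1).\<close>
definition multinomial_coeff :: "nat \<Rightarrow> nat \<Rightarrow> (nat \<Rightarrow> nat) \<Rightarrow> real" where
  "multinomial_coeff K M k = fact K / (\<Prod>i<M. fact (k i))"

definition compositions :: "nat \<Rightarrow> nat \<Rightarrow> (nat \<Rightarrow> nat) set" where
  "compositions M K = {k. k \<in> {..<M} \<rightarrow>\<^sub>E (UNIV :: nat set) \<and> (\<Sum>i<M. k i) = K}"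

definition phi_coeff :: "nat \<Rightarrow> nat \<Rightarrow> (nat \<Rightarrow> nat) \<Rightarrow> real" where
  "phi_coeff K M k = multinomial_coeff K M k / (\<Prod>n<M. (fact n) ^ (k n))"

definition theta_exp :: "nat \<Rightarrow> (nat \<Rightarrow> nat) \<Rightarrow> nat" where
  "theta_exp M k = (\<Sum>l<M. l * k l)"

text \<open>h k m (k < K, m < M) is the m-th entry of the k-th vector h_k.
  h_1,...,h_K i.i.d. CN(0, I_M): all real and imaginary parts of all entries are
  independent real Gaussians with mean 0 and variance 1/2.\<close>
definition iid_CN_vectors :: "'a measure \<Rightarrow> nat \<Rightarrow> nat \<Rightarrow> (nat \<Rightarrow> nat \<Rightarrow> 'a \<Rightarrow> complex) \<Rightarrow> bool" where
  "iid_CN_vectors P M K h \<longleftrightarrow>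
     prob_space.indep_vars P (\<lambda>_. borel)
       (\<lambda>(k, m, b) \<omega>. if b then Re (h k m \<omega>) else Im (h k m \<omega>))
       ({..<K} \<times> {..<M} \<times> (UNIV :: bool set)) \<and>
     (\<forall>k<K. \<forall>m<M.
        distributed P lborel (\<lambda>\<omega>. Re (h k m \<omega>)) (normal_density 0 (sqrt (1/2))) \<and>
        distributed P lborel (\<lambda>\<omega>. Im (h k m \<omega>)) (normal_density 0 (sqrt (1/2))))"

end

theory Submission
  imports Defs "HOL-Probability.Distributions"
begin

lemma compositions_finite: "finite (compositions M K)"
proof -
  have "compositions M K \<subseteq> PiE {..<M} (\<lambda>_. {..K})"
  proof
    fix k assume "k \<in> compositions M K"
    then have k: "k \<in> {..<M} \<rightarrow>\<^sub>E UNIV" "(\<Sum>i<M. k i) = K" by (auto simp: compositions_def)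
    have "k i \<le> K" if "i < M" for i
      using member_le_sum[of i "{..<M}" k] that k(2) by auto
    then show "k \<in> PiE {..<M} (\<lambda>_. {..K})" using k(1) by (auto simp: PiE_def Pi_def)
  qed
  then show ?thesis by (rule finite_subset) (auto intro: finite_PiE)
qed

lemma compositions_0: "compositions 0 K = (if K = 0 then {\<lambda>_. undefined} else {})"
  by (auto simp: compositions_def)

lemma compositions_Suc:
  "compositions (Suc M) K = (\<Union>j\<in>{..K}. (\<lambda>k. k(M := j)) ` compositions M (K - j))"
proof (intro equalityI subsetI)
  fix k assume k: "k \<in> compositions (Suc M) K"
  then have k1: "k \<in> {..<Suc M} \<rightarrow>\<^sub>E UNIV" "(\<Sum>i<Suc M. k i) = K" by (auto simp: compositions_def)
  define k' where "k' = k(M := undefined)"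
  have "(\<Sum>i<M. k' i) = (\<Sum>i<M. k i)" unfolding k'_def by (intro sum.cong) auto
  then have "(\<Sum>i<M. k' i) = K - k M" using k1(2) by simp
  moreover have "k' \<in> {..<M} \<rightarrow>\<^sub>E UNIV" using k1(1) unfolding k'_def by (auto simp: PiE_def extensional_def)
  ultimately have "k' \<in> compositions M (K - k M)" by (simp add: compositions_def)
  moreover have "k = k'(M := k M)" unfolding k'_def by simp
  moreover have "k M \<le> K" using k1(2) by simp
  ultimately show "k \<in> (\<Union>j\<in>{..K}. (\<lambda>k. k(M := j)) ` compositions M (K - j))" by blast
next
  fix k assume "k \<in> (\<Union>j\<in>{..K}. (\<lambda>k. k(M := j)) ` compositions M (K - j))"
  then obtain j k' where j: "j \<le> K" and k': "k' \<in> compositions M (K - j)" and kk: "k = k'(M := j)" by auto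
  from k' have k1: "k' \<in> {..<M} \<rightarrow>\<^sub>E UNIV" "(\<Sum>i<M. k' i) = K - j" by (auto simp: compositions_def)
  have "(\<Sum>i<M. k i) = (\<Sum>i<M. k' i)" unfolding kk by (intro sum.cong) auto
  then have "(\<Sum>i<Suc M. k i) = K" using k1(2) j kk by simp
  moreover have "k \<in> {..<Suc M} \<rightarrow>\<^sub>E UNIV" using k1(1) unfolding kk by (auto simp: PiE_def extensional_def)
  ultimately show "k \<in> compositions (Suc M) K" by (simp add: compositions_def)
qed

lemma multinomial_thm:
  fixes a :: "nat \<Rightarrow> real"
  shows "(\<Sum>n<M. a n) ^ K = (\<Sum>k\<in>compositions M K. multinomial_coeff K M k * (\<Prod>n<M. a n ^ k n))"
proof (induction M arbitrary: K)
  case 0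
  then show ?case by (simp add: compositions_0 multinomial_coeff_def)
next
  case (Suc M)
  have "(\<Sum>n<Suc M. a n) ^ K = (a M + (\<Sum>n<M. a n)) ^ K" by (simp add: add.commute)
  also have "\<dots> = (\<Sum>j\<le>K. of_nat (K choose j) * a M ^ j * (\<Sum>n<M. a n) ^ (K - j))"
    by (rule binomial_ring)
  also have "\<dots> = (\<Sum>j\<le>K. \<Sum>k\<in>compositions M (K - j).
      multinomial_coeff K (Suc M) (k(M := j)) * (\<Prod>n<Suc M. a n ^ (k(M := j)) n))"
  proof (intro sum.cong refl)
    fix j assume j: "j \<in> {..K}"
    have "of_nat (K choose j) * a M ^ j * (\<Sum>n<M. a n) ^ (K - j)
       = (\<Sum>k\<in>compositions M (K - j). of_nat (K choose j) * a M ^ j * (multinomial_coeff (K - j) M k * (\<Prod>n<M. a n ^ k n)))"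
      by (simp add: Suc.IH sum_distrib_left)
    also have "\<dots> = (\<Sum>k\<in>compositions M (K - j).
      multinomial_coeff K (Suc M) (k(M := j)) * (\<Prod>n<Suc M. a n ^ (k(M := j)) n))"
    proof (intro sum.cong refl)
      fix k
      have p1: "(\<Prod>n<Suc M. a n ^ (k(M := j)) n) = a M ^ j * (\<Prod>n<M. a n ^ k n)"
        by (simp add: prod.cong[of "{..<M}" "{..<M}" "\<lambda>n. a n ^ (k(M := j)) n" "\<lambda>n. a n ^ k n"])
      have p2: "(\<Prod>n<Suc M. fact ((k(M := j)) n) :: real) = fact j * (\<Prod>n<M. fact (k n))"
        by (simp add: prod.cong[of "{..<M}" "{..<M}" "\<lambda>n. fact ((k(M := j)) n) :: real" "\<lambda>n. fact (k n)"])
      have p3: "real (K choose j) = fact K / (fact j * fact (K - j))"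
        using j by (simp add: binomial_fact)
      show "of_nat (K choose j) * a M ^ j * (multinomial_coeff (K - j) M k * (\<Prod>n<M. a n ^ k n))
          = multinomial_coeff K (Suc M) (k(M := j)) * (\<Prod>n<Suc M. a n ^ (k(M := j)) n)"
        unfolding multinomial_coeff_def p1 p2 p3 by (simp add: field_simps)
    qed
    finally show "of_nat (K choose j) * a M ^ j * (\<Sum>n<M. a n) ^ (K - j) = (\<Sum>k\<in>compositions M (K - j).
      multinomial_coeff K (Suc M) (k(M := j)) * (\<Prod>n<Suc M. a n ^ (k(M := j)) n))" .
  qed
  also have "\<dots> = (\<Sum>j\<le>K. \<Sum>k\<in>(\<lambda>k. k(M := j)) ` compositions M (K - j).
      multinomial_coeff K (Suc M) k * (\<Prod>n<Suc M. a n ^ k n))"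
  proof (rule sum.cong[OF refl])
    fix j
    have "inj_on (\<lambda>k. k(M := j)) (compositions M (K - j))"
    proof (rule inj_onI)
      fix k k' assume "k \<in> compositions M (K - j)" "k' \<in> compositions M (K - j)" "k(M := j) = k'(M := j)"
      then show "k = k'" unfolding compositions_def
        by (auto simp: fun_eq_iff PiE_def extensional_def) (metis fun_upd_other lessThan_iff order.irrefl)
    qed
    then show "(\<Sum>k\<in>compositions M (K - j). multinomial_coeff K (Suc M) (k(M := j)) * (\<Prod>n<Suc M. a n ^ (k(M := j)) n))
      = (\<Sum>k\<in>(\<lambda>k. k(M := j)) ` compositions M (K - j). multinomial_coeff K (Suc M) k * (\<Prod>n<Suc M. a n ^ k n))"
      by (simp add: sum.reindex)
  qed
  also have "\<dots> = (\<Sum>k\<in>compositions (Suc M) K. multinomial_coeff K (Suc M) k * (\<Prod>n<Suc M. a n ^ k n))"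
    unfolding compositions_Suc
    by (rule sum.UNION_disjoint[symmetric]) (auto intro: finite_imageI compositions_finite dest: fun_cong[where x=M])
  finally show ?case .
qed

definition chi :: "real \<Rightarrow> real" where
  "chi u = (if 0 < u then exp (- u) / sqrt (pi * u) else 0)"

lemma chi_nonneg: "0 \<le> chi u"
  by (simp add: chi_def)

lemma borel_chi[measurable]: "chi \<in> borel_measurable borel"
  unfolding chi_def by measurable

lemma normal_half: "normal_density 0 (sqrt (1/2)) x = exp (- x\<^sup>2) / sqrt pi"
  by (simp add: normal_density_def)

lemma chi_sq_nn:
  assumes a: "0 \<le> a"
  shows "(\<integral>\<^sup>+ x. ennreal (chi x * indicator {..a} x) \<partial>lborel)
       = (\<integral>\<^sup>+ x. ennreal (exp (- x\<^sup>2) / sqrt pi * indicator {-sqrt a..sqrt a} x) \<partial>lborel)"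
proof -
  define b where "b = sqrt a"
  have b: "0 \<le> b" "b\<^sup>2 = a" using a by (auto simp: b_def)
  let ?phi = "\<lambda>x::real. exp (- x\<^sup>2) / sqrt pi"
  have "(\<integral>\<^sup>+ x. ennreal (chi x * indicator {..a} x) \<partial>lborel)
      = (\<integral>\<^sup>+ x. ennreal (chi x * indicator {(\<lambda>x. x\<^sup>2) 0..(\<lambda>x. x\<^sup>2) b} x) \<partial>lborel)"
    using b by (intro nn_integral_cong) (auto simp: chi_def indicator_def)
  also have "\<dots> = (\<integral>\<^sup>+ x. ennreal (chi (x\<^sup>2) * (2 * x) * indicator {0..b} x) \<partial>lborel)"
    by (rule nn_integral_substitution[where g' = "\<lambda>x. 2 * x"])
       (auto intro!: derivative_eq_intros continuous_intros simp: b set_borel_measurable_def)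
  also have "\<dots> = (\<integral>\<^sup>+ x. ennreal (2 * (?phi x * indicator {0<..b} x)) \<partial>lborel)"
  proof (intro nn_integral_cong)
    fix x :: real
    show "ennreal (chi (x\<^sup>2) * (2 * x) * indicator {0..b} x) = ennreal (2 * (?phi x * indicator {0<..b} x))"
    proof (cases "0 < x")
      case True
      then have "sqrt (pi * x\<^sup>2) = sqrt pi * x" by (simp add: real_sqrt_mult)
      then show ?thesis using True by (auto simp: chi_def indicator_def field_simps)
    qed (auto simp: chi_def indicator_def)
  qed
  also have "\<dots> = 2 * (\<integral>\<^sup>+ x. ennreal (?phi x * indicator {0<..b} x) \<partial>lborel)"
  proof -
    have eq: "(\<lambda>x. ennreal (2 * (?phi x * indicator {0<..b} x))) = (\<lambda>x. 2 * ennreal (?phi x * indicator {0<..b} x))"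
      by (rule ext, subst ennreal_mult) auto
    show ?thesis unfolding eq by (rule nn_integral_cmult) measurable
  qed
  finally have e1: "(\<integral>\<^sup>+ x. ennreal (chi x * indicator {..a} x) \<partial>lborel)
     = 2 * (\<integral>\<^sup>+ x. ennreal (?phi x * indicator {0<..b} x) \<partial>lborel)" .
  have e2: "(\<integral>\<^sup>+ x. ennreal (?phi x * indicator {0<..b} x) \<partial>lborel)
      = (\<integral>\<^sup>+ x. ennreal (?phi (-x) * indicator {0..b} (-x)) \<partial>lborel)"
  proof -
    have "(\<integral>\<^sup>+ x. ennreal (?phi x * indicator {0<..b} x) \<partial>lborel)
        = (\<integral>\<^sup>+ x. ennreal (?phi x * indicator {0..b} x) \<partial>lborel)"
      by (intro nn_integral_cong_AE) (use AE_lborel_singleton[of 0] in \<open>auto simp: indicator_def\<close>)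
    also have "\<dots> = ennreal \<bar>-1\<bar> * (\<integral>\<^sup>+ x. ennreal (?phi (0 + -1 * x) * indicator {0..b} (0 + -1 * x)) \<partial>lborel)"
      by (rule nn_integral_real_affine) auto
    finally show ?thesis by simp
  qed
  have "(\<integral>\<^sup>+ x. ennreal (?phi x * indicator {0<..b} x) \<partial>lborel)
      + (\<integral>\<^sup>+ x. ennreal (?phi (-x) * indicator {0..b} (-x)) \<partial>lborel)
      = (\<integral>\<^sup>+ x. ennreal (?phi x * indicator {0<..b} x) + ennreal (?phi (-x) * indicator {0..b} (-x)) \<partial>lborel)"
    by (rule nn_integral_add[symmetric]) measurable
  also have "\<dots> = (\<integral>\<^sup>+ x. ennreal (?phi x * indicator {-b..b} x) \<partial>lborel)"
  proof (intro nn_integral_cong)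
    fix x :: real
    show "ennreal (?phi x * indicator {0<..b} x) + ennreal (?phi (-x) * indicator {0..b} (-x))
        = ennreal (?phi x * indicator {-b..b} x)"
    proof (cases "0 < x")
      case True
      then show ?thesis using b by (simp add: indicator_def)
    next
      case False
      then show ?thesis using b by (simp add: indicator_def)
    qed
  qed
  finally have e3: "(\<integral>\<^sup>+ x. ennreal (?phi x * indicator {0<..b} x) \<partial>lborel)
      + (\<integral>\<^sup>+ x. ennreal (?phi (-x) * indicator {0..b} (-x)) \<partial>lborel)
      = (\<integral>\<^sup>+ x. ennreal (?phi x * indicator {-b..b} x) \<partial>lborel)" .
  have "2 * (\<integral>\<^sup>+ x. ennreal (?phi x * indicator {0<..b} x) \<partial>lborel)
      = (\<integral>\<^sup>+ x. ennreal (?phi x * indicator {0<..b} x) \<partial>lborel)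
      + (\<integral>\<^sup>+ x. ennreal (?phi (-x) * indicator {0..b} (-x)) \<partial>lborel)"
    by (subst e2[symmetric]) (rule mult_2)
  with e1 e3 show ?thesis unfolding b_def by simp
qed

lemma ennreal_times_ind: "ennreal (c * indicator A x) = ennreal c * indicator A x"
  by (auto simp: indicator_def)

lemma sq_le_iff_sqrt: "0 \<le> a \<Longrightarrow> (x\<^sup>2 \<le> a) \<longleftrightarrow> (-sqrt a \<le> x \<and> x \<le> sqrt (a::real))"
proof -
  have "(x\<^sup>2 \<le> a) \<longleftrightarrow> sqrt (x\<^sup>2) \<le> sqrt a" by (rule real_sqrt_le_iff[symmetric])
  also have "\<dots> \<longleftrightarrow> \<bar>x\<bar> \<le> sqrt a" by simp
  finally show ?thesis by (simp add: abs_le_iff) linarith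
qed

lemma (in prob_space) chi_distributed:
  assumes X: "distributed M lborel X (\<lambda>x. ennreal (normal_density 0 (sqrt (1/2)) x))"
  shows "distributed M lborel (\<lambda>\<omega>. (X \<omega>)\<^sup>2) (\<lambda>x. ennreal (chi x))"
proof -
  have Xm[measurable]: "X \<in> borel_measurable M"
    using distributed_measurable[OF X] by simp
  have key: "(\<integral>\<^sup>+ x. ennreal (chi x * indicator {..a} x) \<partial>lborel) = emeasure M {\<omega>\<in>space M. (X \<omega>)\<^sup>2 \<le> a}" for a
  proof (cases "0 \<le> a")
    case True
    have "{\<omega>\<in>space M. (X \<omega>)\<^sup>2 \<le> a} = X -` {-sqrt a..sqrt a} \<inter> space M"
      using True by (auto simp: sq_le_iff_sqrt)
    then have "emeasure M {\<omega>\<in>space M. (X \<omega>)\<^sup>2 \<le> a}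
        = (\<integral>\<^sup>+ x. ennreal (normal_density 0 (sqrt (1/2)) x) * indicator {-sqrt a..sqrt a} x \<partial>lborel)"
      using distributed_emeasure[OF X, of "{-sqrt a..sqrt a}"] by simp
    also have "\<dots> = (\<integral>\<^sup>+ x. ennreal (exp (- x\<^sup>2) / sqrt pi * indicator {-sqrt a..sqrt a} x) \<partial>lborel)"
      by (intro nn_integral_cong) (simp only: ennreal_times_ind normal_half)
    finally show ?thesis using chi_sq_nn[OF True] by simp
  next
    case False
    then have "{\<omega>\<in>space M. (X \<omega>)\<^sup>2 \<le> a} = {}"
      by (auto simp: not_le) (smt (verit) zero_le_power2)
    moreover have "(\<integral>\<^sup>+ x. ennreal (chi x * indicator {..a} x) \<partial>lborel) = 0"
      using False by (intro nn_integral_zero' AE_I2) (auto simp: chi_def indicator_def)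
    ultimately show ?thesis by (simp only:) simp
  qed
  show ?thesis
  proof (rule distributedI_borel_atMost[where g = "\<lambda>a. measure M {\<omega>\<in>space M. (X \<omega>)\<^sup>2 \<le> a}"])
    show "AE x in lborel. 0 \<le> chi x" by (simp add: chi_nonneg)
    fix a
    show "emeasure M {\<omega>\<in>space M. (X \<omega>)\<^sup>2 \<le> a} = ennreal (measure M {\<omega>\<in>space M. (X \<omega>)\<^sup>2 \<le> a})"
      by (simp add: emeasure_eq_measure)
    then show "(\<integral>\<^sup>+ x. ennreal (chi x * indicator {..a} x) \<partial>lborel) = ennreal (measure M {\<omega>\<in>space M. (X \<omega>)\<^sup>2 \<le> a})"
      using key by simp
  qed auto
qed

lemma arcsine_integral:
  assumes z: "0 < z"
  shows "(\<integral>\<^sup>+ y. ennreal ((if 0 < y \<and> y < z then 1 / sqrt ((z - y) * y) else 0) * indicator {0..z} y) \<partial>lborel) = ennreal pi"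
proof -
  define w where "w = (\<lambda>y::real. if 0 < y \<and> y < z then 1 / sqrt ((z - y) * y) else 0)"
  define g where "g = (\<lambda>t::real. z * (sin t)\<^sup>2)"
  have g0: "g 0 = 0" and g1: "g (pi/2) = z" by (simp_all add: g_def)
  have wm[measurable]: "w \<in> borel_measurable borel" unfolding w_def by measurable
  have "(\<integral>\<^sup>+ y. ennreal (w y * indicator {0..z} y) \<partial>lborel)
      = (\<integral>\<^sup>+ y. ennreal (w y * indicator {g 0..g (pi/2)} y) \<partial>lborel)"
    by (simp add: g0 g1)
  also have "\<dots> = (\<integral>\<^sup>+ t. ennreal (w (g t) * (2 * z * sin t * cos t) * indicator {0..pi/2} t) \<partial>lborel)"
  proof (rule nn_integral_substitution)
    show "set_borel_measurable borel {g 0..g (pi / 2)} w" by (simp add: set_borel_measurable_def)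
    show "(g has_real_derivative 2 * z * sin t * cos t) (at t)" for t
      unfolding g_def by (auto intro!: derivative_eq_intros)
    show "continuous_on {0..pi / 2} (\<lambda>t. 2 * z * sin t * cos t)"
      by (intro continuous_intros)
    show "0 \<le> 2 * z * sin t * cos t" if "t \<in> {0..pi/2}" for t
    proof -
      have "0 \<le> sin t" using that by (intro sin_ge_zero) auto
      moreover have "0 \<le> cos t" using that by (intro cos_ge_zero) auto
      ultimately show ?thesis using z by simp
    qed
  qed simp
  also have "\<dots> = (\<integral>\<^sup>+ t. 2 * indicator {0<..<pi/2} t \<partial>lborel)"
  proof (intro nn_integral_cong)
    fix t :: real
    show "ennreal (w (g t) * (2 * z * sin t * cos t) * indicator {0..pi/2} t) = 2 * indicator {0<..<pi/2} t"
    proof (cases "0 < t \<and> t < pi/2")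
      case True
      have s: "0 < sin t" using True by (intro sin_gt_zero) auto
      have c: "0 < cos t" using True by (intro cos_gt_zero) auto
      have sc: "(sin t)\<^sup>2 = 1 - (cos t)\<^sup>2" by (simp add: sin_squared_eq)
      have "(cos t)\<^sup>2 > 0" using c by simp
      then have lt: "g t < z" using z unfolding g_def sc by (simp add: algebra_simps)
      have gp: "0 < g t" unfolding g_def using z s by simp
      have "z - g t = z * (cos t)\<^sup>2" unfolding g_def sc by (simp add: algebra_simps)
      then have "(z - g t) * g t = (z * sin t * cos t)\<^sup>2" unfolding g_def by (simp add: power2_eq_square)
      then have "sqrt ((z - g t) * g t) = z * sin t * cos t" using z s c by simp
      then have eq: "w (g t) * (2 * z * sin t * cos t) = 2"
        using lt gp z s c unfolding w_def by (simp add: field_simps)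
      have i1: "indicator {0..pi/2} t = (1::real)" and i2: "indicator {0<..<pi/2} t = (1::ennreal)"
        using True by (auto simp: indicator_def)
      show ?thesis unfolding i1 i2 by (simp only: mult_1_right eq) simp
    next
      case False
      then have "t \<notin> {0..pi/2} \<or> t = 0 \<or> t = pi/2" by auto
      then show ?thesis
      proof (elim disjE)
        assume "t = 0" then show ?thesis by (simp add: w_def g_def indicator_def)
      next
        assume "t = pi/2"
        moreover from this have "sin t = 1" "cos t = 0" by (simp_all only: sin_pi_half cos_pi_half)
        ultimately show ?thesis by (simp add: w_def g_def indicator_def)
      qed (auto simp: indicator_def)
    qed
  qed
  also have "\<dots> = 2 * emeasure lborel {0<..<pi/2}"
    by (rule nn_integral_cmult_indicator) simp
  also have "\<dots> = ennreal 2 * ennreal (pi / 2)" by simp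
  also have "\<dots> = ennreal pi"
    by (subst ennreal_mult[symmetric]) auto
  finally show ?thesis unfolding w_def .
qed

lemma conv_chi:
  assumes z: "z \<noteq> 0"
  shows "(\<integral>\<^sup>+ y. ennreal (chi (z - y)) * ennreal (chi y) \<partial>lborel) = ennreal (exponential_density 1 z)"
proof (cases "z < 0")
  case True
  have "(\<integral>\<^sup>+ y. ennreal (chi (z - y)) * ennreal (chi y) \<partial>lborel) = 0"
    using True by (intro nn_integral_zero' AE_I2) (auto simp: chi_def)
  then show ?thesis using True by (simp add: exponential_density_def)
next
  case False
  with z have z: "0 < z" by simp
  define w where "w = (\<lambda>y::real. if 0 < y \<and> y < z then 1 / sqrt ((z - y) * y) else 0)"
  have "(\<integral>\<^sup>+ y. ennreal (chi (z - y)) * ennreal (chi y) \<partial>lborel)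
      = (\<integral>\<^sup>+ y. ennreal (exp (- z) / pi) * ennreal (w y * indicator {0..z} y) \<partial>lborel)"
  proof (intro nn_integral_cong)
    fix y :: real
    show "ennreal (chi (z - y)) * ennreal (chi y) = ennreal (exp (- z) / pi) * ennreal (w y * indicator {0..z} y)"
    proof (cases "0 < y \<and> y < z")
      case True
      have "sqrt (pi * (z - y)) * sqrt (pi * y) = pi * sqrt ((z - y) * y)"
        by (simp add: real_sqrt_mult)
      moreover have "exp (- (z - y)) * exp (- y) = exp (- z)" by (simp add: exp_add[symmetric])
      ultimately have eq: "chi (z - y) * chi y = exp (- z) / pi * (w y * indicator {0..z} y)"
        using True unfolding chi_def w_def by (simp add: field_simps indicator_def)
      have "ennreal (chi (z - y)) * ennreal (chi y) = ennreal (chi (z - y) * chi y)"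
        by (rule ennreal_mult[symmetric]) (simp_all add: chi_nonneg)
      also have "\<dots> = ennreal (exp (- z) / pi * (w y * indicator {0..z} y))" by (simp only: eq)
      also have "\<dots> = ennreal (exp (- z) / pi) * ennreal (w y * indicator {0..z} y)"
        by (rule ennreal_mult) (use True in \<open>auto simp: w_def indicator_def\<close>)
      finally show ?thesis .
    next
      case False
      then show ?thesis by (auto simp: chi_def w_def)
    qed
  qed
  also have "\<dots> = ennreal (exp (- z) / pi) * ennreal pi"
    by (subst nn_integral_cmult) (auto simp: arcsine_integral[OF z, folded w_def] w_def)
  also have "\<dots> = ennreal (exponential_density 1 z)"
    using z by (simp add: exponential_density_def ennreal_mult[symmetric])
  finally show ?thesis .
qed

lemma (in prob_space) exp_of_two_normals:
  assumes ind: "indep_var borel X borel Y"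
    and X: "distributed M lborel X (\<lambda>x. ennreal (normal_density 0 (sqrt (1/2)) x))"
    and Y: "distributed M lborel Y (\<lambda>x. ennreal (normal_density 0 (sqrt (1/2)) x))"
  shows "distributed M lborel (\<lambda>\<omega>. (X \<omega>)\<^sup>2 + (Y \<omega>)\<^sup>2) (\<lambda>x. ennreal (exponential_density 1 x))"
proof -
  have ind': "indep_var borel (\<lambda>\<omega>. (X \<omega>)\<^sup>2) borel (\<lambda>\<omega>. (Y \<omega>)\<^sup>2)"
    using indep_var_compose[OF ind, of "\<lambda>x. x\<^sup>2" borel "\<lambda>x. x\<^sup>2" borel]
    by (simp add: comp_def)
  have D: "distributed M lborel (\<lambda>\<omega>. (X \<omega>)\<^sup>2 + (Y \<omega>)\<^sup>2)
      (\<lambda>x. \<integral>\<^sup>+ y. ennreal (chi (x - y)) * ennreal (chi y) \<partial>lborel)"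
    by (rule distributed_convolution[OF ind' chi_distributed[OF X] chi_distributed[OF Y]])
  show ?thesis
  proof (subst distributed_cong_density[symmetric])
    show "AE x in lborel. (\<integral>\<^sup>+ y. ennreal (chi (x - y)) * ennreal (chi y) \<partial>lborel) = ennreal (exponential_density 1 x)"
      using AE_lborel_singleton[of 0] by eventually_elim (rule conv_chi)
    show "(\<lambda>x. \<integral>\<^sup>+ y. ennreal (chi (x - y)) * ennreal (chi y) \<partial>lborel) \<in> borel_measurable lborel"
      using distributed_borel_measurable[OF D] .
  qed (use D in auto)
qed

lemma S_indep_erlang:
  assumes P: "prob_space P" and iid: "iid_CN_vectors P M K h" and M1: "M \<ge> 1"
  shows "prob_space.indep_vars P (\<lambda>_. borel) (\<lambda>k \<omega>. \<Sum>m<M. (cmod (h k m \<omega>))\<^sup>2) {..<K}"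
    and "\<And>k. k < K \<Longrightarrow> distributed P lborel (\<lambda>\<omega>. \<Sum>m<M. (cmod (h k m \<omega>))\<^sup>2) (\<lambda>x. ennreal (erlang_density (M - 1) 1 x))"
proof -
  interpret prob_space P by (rule P)
  define Y where "Y = (\<lambda>(k, m, b) \<omega>. if b then Re (h k m \<omega>) else Im (h k m \<omega>))"
  have IY: "indep_vars (\<lambda>_. borel) Y ({..<K} \<times> {..<M} \<times> UNIV)"
    and D: "\<And>k m. k < K \<Longrightarrow> m < M \<Longrightarrow> distributed P lborel (\<lambda>\<omega>. Re (h k m \<omega>)) (\<lambda>x. ennreal (normal_density 0 (sqrt (1 / 2)) x))
        \<and> distributed P lborel (\<lambda>\<omega>. Im (h k m \<omega>)) (\<lambda>x. ennreal (normal_density 0 (sqrt (1 / 2)) x))"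
    using iid unfolding iid_CN_vectors_def Y_def by auto
  define W where "W = (\<lambda>(k::nat, m::nat) \<omega>. (cmod (h k m \<omega>))\<^sup>2)"
  define Kb where "Kb = (\<lambda>p::nat \<times> nat. {fst p} \<times> {snd p} \<times> (UNIV :: bool set))"
  have IW0: "indep_vars (\<lambda>j. PiM (Kb j) (\<lambda>_. borel)) (\<lambda>j \<omega>. restrict (\<lambda>i. Y i \<omega>) (Kb j)) ({..<K} \<times> {..<M})"
    by (rule indep_vars_restrict[OF IY]) (auto simp: Kb_def disjoint_family_on_def)
  have IW1: "indep_vars (\<lambda>_. borel) (\<lambda>j \<omega>. (\<lambda>f. (f (fst j, snd j, True))\<^sup>2 + (f (fst j, snd j, False))\<^sup>2)
        (restrict (\<lambda>i. Y i \<omega>) (Kb j))) ({..<K} \<times> {..<M})"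
  proof (rule indep_vars_compose2[OF IW0])
    fix j assume "j \<in> {..<K} \<times> {..<M}"
    show "(\<lambda>f. (f (fst j, snd j, True))\<^sup>2 + (f (fst j, snd j, False))\<^sup>2) \<in> borel_measurable (PiM (Kb j) (\<lambda>_. (borel :: real measure)))"
    proof -
      have c: "(\<lambda>f. f (fst j, snd j, b)) \<in> borel_measurable (PiM (Kb j) (\<lambda>_. (borel :: real measure)))" for b
        by (rule measurable_component_singleton) (auto simp: Kb_def)
      show ?thesis by (intro borel_measurable_add borel_measurable_power c)
    qed
  qed
  have IW: "indep_vars (\<lambda>_. borel) W ({..<K} \<times> {..<M})"
  proof (subst indep_vars_cong[OF refl _ refl])
    fix j assume "j \<in> {..<K} \<times> {..<M}"
    show "W j = (\<lambda>\<omega>. (\<lambda>f. (f (fst j, snd j, True))\<^sup>2 + (f (fst j, snd j, False))\<^sup>2)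
        (restrict (\<lambda>i. Y i \<omega>) (Kb j)))"
      by (auto simp: W_def Y_def Kb_def cmod_power2 split: prod.splits)
  qed (rule IW1)
  show "indep_vars (\<lambda>_. borel) (\<lambda>k \<omega>. \<Sum>m<M. (cmod (h k m \<omega>))\<^sup>2) {..<K}"
  proof -
    have I0: "indep_vars (\<lambda>k. PiM ({k} \<times> {..<M}) (\<lambda>_. borel)) (\<lambda>k \<omega>. restrict (\<lambda>i. W i \<omega>) ({k} \<times> {..<M})) {..<K}"
      by (rule indep_vars_restrict[OF IW]) (auto simp: disjoint_family_on_def)
    have I1: "indep_vars (\<lambda>_. borel) (\<lambda>k \<omega>. (\<lambda>f. \<Sum>m<M. f (k, m)) (restrict (\<lambda>i. W i \<omega>) ({k} \<times> {..<M}))) {..<K}"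
    proof (rule indep_vars_compose2[OF I0])
      fix k assume "k \<in> {..<K}"
      show "(\<lambda>f. \<Sum>m<M. f (k, m)) \<in> borel_measurable (PiM ({k} \<times> {..<M}) (\<lambda>_. (borel :: real measure)))"
      proof -
        have [measurable]: "(\<lambda>f. f (k, m)) \<in> borel_measurable (PiM ({k} \<times> {..<M}) (\<lambda>_. (borel :: real measure)))" if "m < M" for m
          by (rule measurable_component_singleton) (use that in auto)
        show ?thesis by (rule borel_measurable_sum) simp
      qed
    qed
    show ?thesis
    proof (subst indep_vars_cong[OF refl _ refl])
      fix k assume "k \<in> {..<K}"
      show "(\<lambda>\<omega>. \<Sum>m<M. (cmod (h k m \<omega>))\<^sup>2) = (\<lambda>\<omega>. (\<lambda>f. \<Sum>m<M. f (k, m)) (restrict (\<lambda>i. W i \<omega>) ({k} \<times> {..<M})))"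
        by (auto simp: W_def intro!: sum.cong)
    qed (rule I1)
  qed
  fix k assume k: "k < K"
  have expW: "distributed P lborel (W i) (\<lambda>x. ennreal (erlang_density 0 1 x))" if i: "i \<in> {k} \<times> {..<M}" for i
  proof -
    obtain m where i': "i = (k, m)" "m < M" using i by auto
    have ind: "indep_var borel (\<lambda>\<omega>. Re (h k m \<omega>)) borel (\<lambda>\<omega>. Im (h k m \<omega>))"
    proof -
      have "indep_var borel ((\<lambda>f. f (k, m, True)) \<circ> (\<lambda>\<omega>. restrict (\<lambda>i. Y i \<omega>) {(k, m, True)}))
          borel ((\<lambda>f. f (k, m, False)) \<circ> (\<lambda>\<omega>. restrict (\<lambda>i. Y i \<omega>) {(k, m, False)}))"
        using k i' by (intro indep_var_compose[OF indep_var_restrict[OF IY]]) auto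
      also have "((\<lambda>f. f (k, m, True)) \<circ> (\<lambda>\<omega>. restrict (\<lambda>i. Y i \<omega>) {(k, m, True)})) = (\<lambda>\<omega>. Re (h k m \<omega>))"
        by (auto simp: Y_def)
      also have "((\<lambda>f. f (k, m, False)) \<circ> (\<lambda>\<omega>. restrict (\<lambda>i. Y i \<omega>) {(k, m, False)})) = (\<lambda>\<omega>. Im (h k m \<omega>))"
        by (auto simp: Y_def)
      finally show ?thesis .
    qed
    have "distributed P lborel (\<lambda>\<omega>. (Re (h k m \<omega>))\<^sup>2 + (Im (h k m \<omega>))\<^sup>2) (\<lambda>x. ennreal (exponential_density 1 x))"
      using exp_of_two_normals[OF ind] D[OF k i'(2)] by auto
    moreover have "(\<lambda>\<omega>. (Re (h k m \<omega>))\<^sup>2 + (Im (h k m \<omega>))\<^sup>2) = W i"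
      by (auto simp: W_def i' cmod_power2)
    ultimately show ?thesis by simp
  qed
  have "distributed P lborel (\<lambda>\<omega>. \<Sum>i\<in>{k} \<times> {..<M}. W i \<omega>) (\<lambda>x. ennreal (erlang_density ((\<Sum>i\<in>{k} \<times> {..<M}. Suc 0) - 1) 1 x))"
    by (rule erlang_distributed_sum[OF _ _ _ expW]) (use M1 k in \<open>auto intro: indep_vars_subset[OF IW] simp: lessThan_empty_iff\<close>)
  moreover have "(\<lambda>\<omega>. \<Sum>i\<in>{k} \<times> {..<M}. W i \<omega>) = (\<lambda>\<omega>. \<Sum>m<M. (cmod (h k m \<omega>))\<^sup>2)"
  proof
    fix \<omega>
    have "{k} \<times> {..<M} = (\<lambda>m. (k, m)) ` {..<M}" by auto
    then show "(\<Sum>i\<in>{k} \<times> {..<M}. W i \<omega>) = (\<Sum>m<M. (cmod (h k m \<omega>))\<^sup>2)"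
      by (simp add: sum.reindex inj_on_def W_def)
  qed
  ultimately show "distributed P lborel (\<lambda>\<omega>. \<Sum>m<M. (cmod (h k m \<omega>))\<^sup>2) (\<lambda>x. ennreal (erlang_density (M - 1) 1 x))"
    by simp
qed

lemma L_ftc:
  fixes \<rho> s z :: real
  assumes rho: "0 < \<rho>" and z: "0 \<le> z" and s: "s < 1"
  shows "ennreal (1 - (1 + \<rho> * z) powr (s - 1))
       = (\<integral>\<^sup>+ t. ennreal ((1 - s) * \<rho> * (1 + \<rho> * t) powr (s - 2)) * indicator {0..z} t \<partial>lborel)"
proof -
  have d: "((\<lambda>t. - ((1 + \<rho> * t) powr (s - 1))) has_real_derivative (1 - s) * \<rho> * (1 + \<rho> * t) powr (s - 2)) (at t)"
    if "t \<in> {0..z}" for t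
  proof -
    have pos: "0 < 1 + \<rho> * t" using that rho by (simp add: add_pos_nonneg)
    have "((\<lambda>t. - ((1 + \<rho> * t) powr (s - 1))) has_real_derivative
        - ((s - 1) * (1 + \<rho> * t) powr (s - 1 - 1) * \<rho>)) (at t)"
      using pos by (auto intro!: derivative_eq_intros)
    moreover have "- ((s - 1) * (1 + \<rho> * t) powr (s - 1 - 1) * \<rho>) = (1 - s) * \<rho> * (1 + \<rho> * t) powr (s - 2)"
      by (simp add: algebra_simps)
    ultimately show ?thesis by simp
  qed
  have "(\<integral>\<^sup>+ t\<in>{0..z}. ennreal ((1 - s) * \<rho> * (1 + \<rho> * t) powr (s - 2)) \<partial>lborel)
      = ennreal ((- ((1 + \<rho> * z) powr (s - 1))) - (- ((1 + \<rho> * 0) powr (s - 1))))"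
    by (rule nn_integral_FTC_Icc[OF _ d]) (use z rho s in \<open>auto intro!: mult_nonneg_nonneg\<close>)
  then show ?thesis by simp
qed

lemma L_Qexp:
  fixes t :: real
  shows "(\<Sum>n<M. t ^ n * exp (- t) / fact n) ^ K
    = (\<Sum>c\<in>compositions M K. phi_coeff K M c * t ^ theta_exp M c * exp (- (real K * t)))"
  unfolding multinomial_thm
proof (rule sum.cong[OF refl])
  fix c assume c: "c \<in> compositions M K"
  then have sc: "(\<Sum>n<M. c n) = K" by (simp add: compositions_def)
  have "(\<Prod>n<M. (t ^ n * exp (- t) / fact n) ^ c n)
      = (\<Prod>n<M. t ^ (n * c n) * exp (- t) ^ c n / fact n ^ c n)"
    by (intro prod.cong refl) (simp add: power_mult_distrib power_divide power_mult)
  also have "\<dots> = (\<Prod>n<M. t ^ (n * c n)) * (\<Prod>n<M. exp (- t) ^ c n) / (\<Prod>n<M. fact n ^ c n)"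
    by (simp add: prod_dividef prod.distrib)
  also have "(\<Prod>n<M. t ^ (n * c n)) = t ^ theta_exp M c"
    by (simp add: theta_exp_def power_sum)
  also have "(\<Prod>n<M. exp (- t) ^ c n) = exp (- (real K * t))"
  proof -
    have "(\<Prod>n<M. exp (- t) ^ c n) = (\<Prod>n<M. exp (- (real (c n) * t)))"
      by (intro prod.cong refl) (simp add: exp_of_nat_mult[symmetric])
    also have "\<dots> = exp (\<Sum>n<M. - (real (c n) * t))" by (simp add: exp_sum)
    also have "(\<Sum>n<M. - (real (c n) * t)) = - (real (\<Sum>n<M. c n) * t)"
      by (simp add: sum_negf sum_distrib_right)
    finally show ?thesis by (simp add: sc)
  qed
  finally show "multinomial_coeff K M c * (\<Prod>n<M. (t ^ n * exp (- t) / fact n) ^ c n)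
      = phi_coeff K M c * t ^ theta_exp M c * exp (- (real K * t))"
    by (simp add: phi_coeff_def)
qed

lemma L_term:
  fixes \<rho> s :: real and K th :: nat
  assumes rho: "0 < \<rho>" and s: "s < 1" and K1: "K \<ge> 1"
  shows "(\<integral>\<^sup>+ t. ennreal (\<rho> * (1 + \<rho> * t) powr (s - 2) * t ^ th * exp (- (real K * t)) * indicator {0..} t) \<partial>lborel)
     = ennreal (Gamma (1 + real th) * tricomi_U (real th + 1) (real th + s) (real K / \<rho>) / \<rho> ^ th)"
proof -
  define z where "z = real K / \<rho>"
  have z: "0 < z" using K1 rho by (simp add: z_def)
  define G where "G = (\<lambda>u::real. exp (- z * u) * u powr (real th + 1 - 1) * (1 + u) powr (real th + s - (real th + 1) - 1))"
  define H where "H = (\<lambda>u::real. indicator {0<..} u * G u)"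
  define A where "A = (\<integral>\<^sup>+ t. ennreal (\<rho> * (1 + \<rho> * t) powr (s - 2) * t ^ th * exp (- (real K * t)) * indicator {0..} t) \<partial>lborel)"
  have Hm[measurable]: "H \<in> borel_measurable borel" unfolding H_def G_def by measurable
  have H_nonneg: "0 \<le> H u" for u unfolding H_def G_def by (simp add: indicator_def)
  have GH: "Gamma (real th + 1) * tricomi_U (real th + 1) (real th + s) z = integral\<^sup>L lborel H"
  proof -
    have "Gamma (real th + 1) > 0" by (rule Gamma_real_pos) simp
    then have "Gamma (real th + 1) \<noteq> 0" by linarith
    then show ?thesis
      unfolding tricomi_U_def set_lebesgue_integral_def H_def G_def by simp
  qed
  have sub: "(\<integral>\<^sup>+ u. ennreal (H u) \<partial>lborel) = ennreal (\<rho> ^ th) * A"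
  proof -
    have "(\<integral>\<^sup>+ u. ennreal (H u) \<partial>lborel) = ennreal \<bar>\<rho>\<bar> * (\<integral>\<^sup>+ t. ennreal (H (0 + \<rho> * t)) \<partial>lborel)"
      by (rule nn_integral_real_affine) (use rho in auto)
    also have "(\<integral>\<^sup>+ t. ennreal (H (0 + \<rho> * t)) \<partial>lborel)
        = (\<integral>\<^sup>+ t. ennreal (\<rho> ^ th) * ennreal ((1 + \<rho> * t) powr (s - 2) * t ^ th * exp (- (real K * t)) * indicator {0..} t) \<partial>lborel)"
    proof (rule nn_integral_cong_AE)
      show "AE t in lborel. ennreal (H (0 + \<rho> * t)) = ennreal (\<rho> ^ th) * ennreal ((1 + \<rho> * t) powr (s - 2) * t ^ th * exp (- (real K * t)) * indicator {0..} t)"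
        using AE_lborel_singleton[of 0]
      proof eventually_elim
        case (elim t)
        show ?case
        proof (cases "0 < t")
          case True
          have eq: "H (0 + \<rho> * t) = \<rho> ^ th * ((1 + \<rho> * t) powr (s - 2) * t ^ th * exp (- (real K * t)) * indicator {0..} t)"
            using True rho unfolding H_def G_def z_def
            by (simp add: powr_realpow power_mult_distrib indicator_def algebra_simps)
          show ?thesis unfolding eq by (rule ennreal_mult) (use True rho in auto)
        next
          case False
          with elim have "t < 0" by simp
          then show ?thesis using rho by (simp add: H_def indicator_def zero_less_mult_iff)
        qed
      qed
    qed
    also have "\<dots> = ennreal (\<rho> ^ th) * (\<integral>\<^sup>+ t. ennreal ((1 + \<rho> * t) powr (s - 2) * t ^ th * exp (- (real K * t)) * indicator {0..} t) \<partial>lborel)"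
      by (rule nn_integral_cmult) measurable
    finally have "(\<integral>\<^sup>+ u. ennreal (H u) \<partial>lborel) = ennreal (\<rho> ^ th) * (ennreal \<rho> * (\<integral>\<^sup>+ t. ennreal ((1 + \<rho> * t) powr (s - 2) * t ^ th * exp (- (real K * t)) * indicator {0..} t) \<partial>lborel))"
      using rho by (simp add: ac_simps)
    also have "ennreal \<rho> * (\<integral>\<^sup>+ t. ennreal ((1 + \<rho> * t) powr (s - 2) * t ^ th * exp (- (real K * t)) * indicator {0..} t) \<partial>lborel) = A"
      unfolding A_def
    proof (subst nn_integral_cmult[symmetric], measurable, intro nn_integral_cong)
      fix x :: real
      show "ennreal \<rho> * ennreal ((1 + \<rho> * x) powr (s - 2) * x ^ th * exp (- (real K * x)) * indicator {0..} x)
        = ennreal (\<rho> * (1 + \<rho> * x) powr (s - 2) * x ^ th * exp (- (real K * x)) * indicator {0..} x)"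
      proof (cases "0 \<le> x")
        case True
        then show ?thesis using rho by (simp add: ennreal_mult[symmetric] mult.assoc)
      qed (simp add: indicator_def)
    qed
    finally show ?thesis .
  qed
  have fin: "(\<integral>\<^sup>+ u. ennreal (H u) \<partial>lborel) < \<infinity>"
  proof -
    have "(\<integral>\<^sup>+ u. ennreal (H u) \<partial>lborel) \<le> (\<integral>\<^sup>+ u. ennreal (fact th / z ^ Suc th) * ennreal (erlang_density th z u) \<partial>lborel)"
    proof (rule nn_integral_mono)
      fix u :: real
      have "H u \<le> fact th / z ^ Suc th * erlang_density th z u"
      proof (cases "0 < u")
        case True
        have "(1 + u) powr (s - 2) \<le> 1" using True s by (intro less_imp_le[OF powr_less_one]) auto
        then have "H u \<le> exp (- z * u) * u ^ th * 1"
          using True unfolding H_def G_def by (simp add: powr_realpow mult_left_mono)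
        also have "\<dots> = fact th / z ^ Suc th * erlang_density th z u"
          using True z by (simp add: erlang_density_def field_simps)
        finally show ?thesis .
      next
        case False
        then show ?thesis using z by (simp add: H_def)
      qed
      then show "ennreal (H u) \<le> ennreal (fact th / z ^ Suc th) * ennreal (erlang_density th z u)"
        using z by (simp add: ennreal_mult[symmetric])
    qed
    also have "\<dots> = ennreal (fact th / z ^ Suc th) * (\<integral>\<^sup>+ u. ennreal (erlang_density th z u) \<partial>lborel)"
      by (rule nn_integral_cmult) measurable
    also have "(\<integral>\<^sup>+ u. ennreal (erlang_density th z u) \<partial>lborel) = 1"
      using nn_integral_erlang_ith_moment[OF z, of th 0] by simp
    finally show ?thesis by (metis ennreal_less_top le_less_trans mult.right_neutral infinity_ennreal_def)
  qed
  have int: "integrable lborel H"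
    by (rule integrableI_nonneg) (use fin H_nonneg in auto)
  have "ennreal (\<rho> ^ th) * A = ennreal (integral\<^sup>L lborel H)"
    using sub nn_integral_eq_integral[OF int] H_nonneg by simp
  also have "\<dots> = ennreal (\<rho> ^ th) * ennreal (integral\<^sup>L lborel H / \<rho> ^ th)"
    using rho by (simp add: ennreal_mult[symmetric] integral_nonneg_AE H_nonneg)
  finally have "A = ennreal (integral\<^sup>L lborel H / \<rho> ^ th)"
    using rho by (subst (asm) ennreal_mult_cancel_left) auto
  then show ?thesis unfolding A_def using GH by (simp add: z_def add.commute)
qed

lemma L_surv:
  assumes P: "prob_space P" and K1: "K \<ge> 1" and M1: "M \<ge> 1"
    and ind: "prob_space.indep_vars P (\<lambda>_. borel) S {..<K}"
    and D: "\<And>k. k < K \<Longrightarrow> distributed P lborel (S k) (\<lambda>x. ennreal (erlang_density (M - 1) 1 x))"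
    and t: "0 \<le> t"
  shows "emeasure P {\<omega> \<in> space P. t < (MIN k\<in>{..<K}. S k \<omega>)} = ennreal ((\<Sum>n<M. t ^ n * exp (- t) / fact n) ^ K)"
proof -
  interpret prob_space P by (rule P)
  have ne: "{..<K} \<noteq> {}" using K1 by (auto simp: lessThan_empty_iff)
  have "{\<omega> \<in> space P. t < (MIN k\<in>{..<K}. S k \<omega>)} = (\<Inter>k\<in>{..<K}. S k -` {t<..} \<inter> space P)"
    using ne by (auto simp: Min_gr_iff)
  then have "prob {\<omega> \<in> space P. t < (MIN k\<in>{..<K}. S k \<omega>)} = (\<Prod>k\<in>{..<K}. prob (S k -` {t<..} \<inter> space P))"
    using indep_varsD[OF ind ne] by simp
  also have "\<dots> = (\<Prod>k\<in>{..<K}. (\<Sum>n<M. t ^ n * exp (- t) / fact n))"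
  proof (rule prod.cong[OF refl])
    fix k assume k: "k \<in> {..<K}"
    have "prob (S k -` {t<..} \<inter> space P) = \<P>(x in P. t < S k x)"
      by (auto intro!: arg_cong[where f=prob])
    also have "\<dots> = 1 - erlang_CDF (M - 1) 1 t"
      using D k t by (intro erlang_distributed_gt) auto
    also have "\<dots> = (\<Sum>n\<le>M - 1. t ^ n * exp (- t) / fact n)"
      using t by (simp add: erlang_CDF_def)
    also have "{..M - 1} = {..<M}" using M1 by auto
    finally show "prob (S k -` {t<..} \<inter> space P) = (\<Sum>n<M. t ^ n * exp (- t) / fact n)" .
  qed
  finally show ?thesis by (simp add: emeasure_eq_measure)
qed

lemma f_le1:
  fixes \<rho> s z :: real
  assumes "0 < \<rho>" "s < 1" "0 \<le> z"
  shows "(1 + \<rho> * z) powr (s - 1) \<le> 1"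
proof (cases "z = 0")
  case False
  then have "1 < 1 + \<rho> * z" using assms by simp
  then show ?thesis using assms by (intro less_imp_le[OF powr_less_one]) auto
qed simp

lemma tricomi_nonneg: "0 < a \<Longrightarrow> 0 \<le> tricomi_U a b z"
  unfolding tricomi_U_def set_lebesgue_integral_def
  by (intro mult_nonneg_nonneg integral_nonneg_AE AE_I2)
     (auto simp: indicator_def intro!: mult_nonneg_nonneg Gamma_real_pos less_imp_le)

lemma phi_nonneg: "0 \<le> phi_coeff K M c"
  unfolding phi_coeff_def multinomial_coeff_def
  by (intro divide_nonneg_nonneg mult_nonneg_nonneg prod_nonneg) auto

lemma partB:
  fixes P :: "'a measure" and S :: "nat \<Rightarrow> 'a \<Rightarrow> real" and \<rho> s :: real
  assumes P: "prob_space P" and K1: "K \<ge> 1" and M1: "M \<ge> 1" and rho: "\<rho> > 0" and s: "s < 1"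
    and ind: "prob_space.indep_vars P (\<lambda>_. borel) S {..<K}"
    and D: "\<And>k. k < K \<Longrightarrow> distributed P lborel (S k) (\<lambda>x. ennreal (erlang_density (M - 1) 1 x))"
  shows "prob_space.expectation P (\<lambda>\<omega>. (1 + \<rho> * (MIN k\<in>{..<K}. S k \<omega>)) powr (s - 1))
     = 1 + (s - 1) * (\<Sum>c\<in>compositions M K. phi_coeff K M c * Gamma (1 + real (theta_exp M c)) / \<rho> ^ theta_exp M c
          * tricomi_U (real (theta_exp M c) + 1) (real (theta_exp M c) + s) (real K / \<rho>))"
proof -
  interpret prob_space P by (rule P)
  define Z where "Z = (\<lambda>\<omega>. MIN k\<in>{..<K}. S k \<omega>)"
  define f where "f = (\<lambda>z::real. (1 + \<rho> * z) powr (s - 1))"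
  define d where "d = (\<lambda>t::real. (1 - s) * \<rho> * (1 + \<rho> * t) powr (s - 2))"
  define X where "X = (\<lambda>c. phi_coeff K M c * Gamma (1 + real (theta_exp M c)) / \<rho> ^ theta_exp M c
          * tricomi_U (real (theta_exp M c) + 1) (real (theta_exp M c) + s) (real K / \<rho>))"
  define Q where "Q = (\<lambda>t::real. (\<Sum>n<M. t ^ n * exp (- t) / fact n))"
  have Sm: "S k \<in> borel_measurable P" if "k \<in> {..<K}" for k
    using distributed_measurable[OF D] that by auto
  have Zm[measurable]: "Z \<in> borel_measurable P"
    unfolding Z_def by (rule borel_measurable_Min) (auto intro: Sm)
  have AEZ: "AE \<omega> in P. 0 \<le> Z \<omega>"
  proof -
    have "AE \<omega> in P. 0 \<le> S k \<omega>" if k: "k < K" for k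
    proof (subst distributed_AE2[OF D[OF k]])
      show "AE x in lborel. 0 < ennreal (erlang_density (M - 1) 1 x) \<longrightarrow> 0 \<le> x"
        by (intro AE_I2) (auto simp: erlang_density_def)
    qed simp
    then have "AE \<omega> in P. \<forall>k\<in>{..<K}. 0 \<le> S k \<omega>" by (subst AE_finite_all) auto
    then show ?thesis
      by eventually_elim (use K1 in \<open>auto simp: Z_def Min_ge_iff lessThan_empty_iff\<close>)
  qed
  have dnn: "0 \<le> d t" for t unfolding d_def using s rho by (auto intro!: mult_nonneg_nonneg)
  define F where "F = (\<lambda>\<omega> t. ennreal (d t * indicator {0..} t * (if t < Z \<omega> then 1 else 0)))"
  have Fm: "(\<lambda>(\<omega>, t). F \<omega> t) \<in> borel_measurable (P \<Otimes>\<^sub>M lborel)"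
    unfolding F_def d_def by measurable
  have E1: "(\<integral>\<^sup>+ \<omega>. ennreal (1 - f (Z \<omega>)) \<partial>P) = (\<integral>\<^sup>+ \<omega>. (\<integral>\<^sup>+ t. F \<omega> t \<partial>lborel) \<partial>P)"
  proof (rule nn_integral_cong_AE)
    show "AE \<omega> in P. ennreal (1 - f (Z \<omega>)) = (\<integral>\<^sup>+ t. F \<omega> t \<partial>lborel)"
      using AEZ
    proof eventually_elim
      case (elim \<omega>)
      have "ennreal (1 - f (Z \<omega>)) = (\<integral>\<^sup>+ t. ennreal (d t) * indicator {0..Z \<omega>} t \<partial>lborel)"
        unfolding f_def d_def by (rule L_ftc[OF rho elim s])
      also have "\<dots> = (\<integral>\<^sup>+ t. F \<omega> t \<partial>lborel)"
      proof (rule nn_integral_cong_AE)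
        show "AE t in lborel. ennreal (d t) * indicator {0..Z \<omega>} t = F \<omega> t"
          using AE_lborel_singleton[of "Z \<omega>"]
          by eventually_elim (auto simp: F_def indicator_def)
      qed
      finally show ?case .
    qed
  qed
  have E2: "(\<integral>\<^sup>+ \<omega>. (\<integral>\<^sup>+ t. F \<omega> t \<partial>lborel) \<partial>P) = (\<integral>\<^sup>+ t. (\<integral>\<^sup>+ \<omega>. F \<omega> t \<partial>P) \<partial>lborel)"
    using pair_sigma_finite.Fubini'[OF _ Fm]
    by (simp add: pair_sigma_finite.intro prob_space_imp_sigma_finite P lborel.sigma_finite_measure_axioms)
  have E3: "(\<integral>\<^sup>+ \<omega>. F \<omega> t \<partial>P) = ennreal (d t * indicator {0..} t * Q t ^ K)" for t
  proof -
    have "(\<integral>\<^sup>+ \<omega>. F \<omega> t \<partial>P) = (\<integral>\<^sup>+ \<omega>. ennreal (d t * indicator {0..} t) * indicator {\<omega> \<in> space P. t < Z \<omega>} \<omega> \<partial>P)"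
      by (intro nn_integral_cong) (auto simp: F_def indicator_def)
    also have "\<dots> = ennreal (d t * indicator {0..} t) * emeasure P {\<omega> \<in> space P. t < Z \<omega>}"
      by (rule nn_integral_cmult_indicator) measurable
    also have "\<dots> = ennreal (d t * indicator {0..} t * Q t ^ K)"
    proof (cases "0 \<le> t")
      case True
      have em: "emeasure P {\<omega> \<in> space P. t < Z \<omega>} = ennreal (Q t ^ K)"
        unfolding Z_def Q_def by (rule L_surv[OF P K1 M1 ind D True])
      have q: "0 \<le> Q t ^ K" using True
        by (auto simp: Q_def intro!: sum_nonneg zero_le_power divide_nonneg_nonneg mult_nonneg_nonneg)
      have "ennreal (d t * indicator {0..} t) * emeasure P {\<omega> \<in> space P. t < Z \<omega>} = ennreal (d t) * ennreal (Q t ^ K)"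
        using True em by simp
      also have "\<dots> = ennreal (d t * Q t ^ K)" by (rule ennreal_mult[symmetric]) (simp_all add: dnn q)
      finally show ?thesis using True by simp
    qed simp
    finally show ?thesis .
  qed
  define T where "T = (\<lambda>th t. \<rho> * (1 + \<rho> * t) powr (s - 2) * t ^ th * exp (- (real K * t)) * indicator {0..} t)"
  have Tnn: "0 \<le> T th t" for th t
    unfolding T_def using rho by (auto simp: indicator_def)
  have E4: "d t * indicator {0..} t * Q t ^ K = (\<Sum>c\<in>compositions M K. ((1 - s) * phi_coeff K M c) * T (theta_exp M c) t)" for t
    unfolding Q_def L_Qexp T_def d_def sum_distrib_left
    by (intro sum.cong refl) (simp add: algebra_simps)
  have E5: "(\<integral>\<^sup>+ t. ennreal (d t * indicator {0..} t * Q t ^ K) \<partial>lborel) = ennreal (\<Sum>c\<in>compositions M K. (1 - s) * X c)"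
  proof -
    have "(\<integral>\<^sup>+ t. ennreal (d t * indicator {0..} t * Q t ^ K) \<partial>lborel)
        = (\<integral>\<^sup>+ t. (\<Sum>c\<in>compositions M K. ennreal ((1 - s) * phi_coeff K M c) * ennreal (T (theta_exp M c) t)) \<partial>lborel)"
    proof (intro nn_integral_cong)
      fix t
      show "ennreal (d t * indicator {0..} t * Q t ^ K)
          = (\<Sum>c\<in>compositions M K. ennreal ((1 - s) * phi_coeff K M c) * ennreal (T (theta_exp M c) t))"
        unfolding E4 using s
        by (subst sum_ennreal[symmetric]) (auto simp: ennreal_mult[symmetric] phi_nonneg Tnn intro!: mult_nonneg_nonneg sum.cong)
    qed
    also have "\<dots> = (\<Sum>c\<in>compositions M K. \<integral>\<^sup>+ t. ennreal ((1 - s) * phi_coeff K M c) * ennreal (T (theta_exp M c) t) \<partial>lborel)"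
      by (rule nn_integral_sum) (auto simp: T_def)
    also have "\<dots> = (\<Sum>c\<in>compositions M K. ennreal ((1 - s) * X c))"
    proof (rule sum.cong[OF refl])
      fix c
      have "(\<integral>\<^sup>+ t. ennreal ((1 - s) * phi_coeff K M c) * ennreal (T (theta_exp M c) t) \<partial>lborel)
          = ennreal ((1 - s) * phi_coeff K M c) * (\<integral>\<^sup>+ t. ennreal (T (theta_exp M c) t) \<partial>lborel)"
        by (rule nn_integral_cmult) (auto simp: T_def)
      also have "(\<integral>\<^sup>+ t. ennreal (T (theta_exp M c) t) \<partial>lborel)
          = ennreal (Gamma (1 + real (theta_exp M c)) * tricomi_U (real (theta_exp M c) + 1) (real (theta_exp M c) + s) (real K / \<rho>) / \<rho> ^ theta_exp M c)"
        unfolding T_def by (rule L_term[OF rho s K1])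
      also have "ennreal ((1 - s) * phi_coeff K M c) * \<dots> = ennreal ((1 - s) * X c)"
        using s rho
        by (subst ennreal_mult[symmetric])
           (auto simp: X_def phi_nonneg tricomi_nonneg Gamma_real_pos less_imp_le intro!: mult_nonneg_nonneg divide_nonneg_pos)
      finally show "(\<integral>\<^sup>+ t. ennreal ((1 - s) * phi_coeff K M c) * ennreal (T (theta_exp M c) t) \<partial>lborel) = ennreal ((1 - s) * X c)" .
    qed
    also have "\<dots> = ennreal (\<Sum>c\<in>compositions M K. (1 - s) * X c)"
      using s rho
      by (intro sum_ennreal)
         (auto simp: X_def phi_nonneg tricomi_nonneg Gamma_real_pos less_imp_le intro!: mult_nonneg_nonneg divide_nonneg_pos)
    finally show ?thesis .
  qed
  have NN: "(\<integral>\<^sup>+ \<omega>. ennreal (1 - f (Z \<omega>)) \<partial>P) = ennreal (\<Sum>c\<in>compositions M K. (1 - s) * X c)"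
    using E1 E2 E3 E5 by simp
  have fZm[measurable]: "(\<lambda>\<omega>. f (Z \<omega>)) \<in> borel_measurable P" unfolding f_def by measurable
  have AEf: "AE \<omega> in P. 0 \<le> f (Z \<omega>) \<and> f (Z \<omega>) \<le> 1"
    using AEZ by eventually_elim (use rho s in \<open>auto simp: f_def powr_ge_zero intro: f_le1\<close>)
  have intf: "integrable P (\<lambda>\<omega>. f (Z \<omega>))"
  proof (rule finite_measure.integrable_const_bound[where B=1])
    show "finite_measure P" by (rule finite_measure_axioms)
    show "AE x in P. norm (f (Z x)) \<le> 1" using AEf by eventually_elim auto
  qed simp
  have "expectation (\<lambda>\<omega>. 1 - f (Z \<omega>)) = enn2real (\<integral>\<^sup>+ \<omega>. ennreal (1 - f (Z \<omega>)) \<partial>P)"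
    by (rule integral_eq_nn_integral) (use AEf in \<open>auto elim!: eventually_mono\<close>)
  also have "\<dots> = (\<Sum>c\<in>compositions M K. (1 - s) * X c)"
    unfolding NN using s rho
    by (intro enn2real_ennreal sum_nonneg)
       (auto simp: X_def phi_nonneg tricomi_nonneg Gamma_real_pos less_imp_le intro!: mult_nonneg_nonneg divide_nonneg_pos)
  finally have e1: "expectation (\<lambda>\<omega>. 1 - f (Z \<omega>)) = (\<Sum>c\<in>compositions M K. (1 - s) * X c)" .
  have "expectation (\<lambda>\<omega>. 1 - f (Z \<omega>)) = expectation (\<lambda>\<omega>. 1) - expectation (\<lambda>\<omega>. f (Z \<omega>))"
    by (rule Bochner_Integration.integral_diff) (auto intro: intf)
  also have "expectation (\<lambda>\<omega>. 1::real) = 1" by (simp add: prob_space.prob_space[OF P])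
  finally have "expectation (\<lambda>\<omega>. f (Z \<omega>)) = 1 - (\<Sum>c\<in>compositions M K. (1 - s) * X c)"
    using e1 by simp
  also have "\<dots> = 1 + (s - 1) * (\<Sum>c\<in>compositions M K. X c)"
  proof -
    have "(\<Sum>c\<in>compositions M K. (1 - s) * X c) = (1 - s) * (\<Sum>c\<in>compositions M K. X c)"
      by (rule sum_distrib_left[symmetric])
    then show ?thesis by (simp add: algebra_simps)
  qed
  finally show ?thesis unfolding f_def Z_def X_def .
qed

theorem theorem1:
  fixes P :: "'a measure" and M K :: nat and \<rho> s :: real
    and h :: "nat \<Rightarrow> nat \<Rightarrow> 'a \<Rightarrow> complex"
  assumes "prob_space P"
    and "M \<ge> 1" and "K \<ge> 1" and "\<rho> > 0" and "s < 1"
    and "iid_CN_vectors P M K h"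
  shows "prob_space.expectation P
           (\<lambda>\<omega>. (1 + \<rho> * (MIN k\<in>{..<K}. (\<Sum>m<M. (cmod (h k m \<omega>))\<^sup>2))) powr (s - 1))
         = 1 + (s - 1) * (\<Sum>k\<in>compositions M K.
             phi_coeff K M k * Gamma (1 + real (theta_exp M k)) / \<rho> ^ theta_exp M k
             * tricomi_U (real (theta_exp M k) + 1) (real (theta_exp M k) + s) (real K / \<rho>))"
proof -
  have A1: "prob_space.indep_vars P (\<lambda>_. borel) (\<lambda>k \<omega>. \<Sum>m<M. (cmod (h k m \<omega>))\<^sup>2) {..<K}"
    and A2: "\<And>k. k < K \<Longrightarrow> distributed P lborel (\<lambda>\<omega>. \<Sum>m<M. (cmod (h k m \<omega>))\<^sup>2) (\<lambda>x. ennreal (erlang_density (M - 1) 1 x))"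
    using S_indep_erlang[OF assms(1) assms(6) assms(2)] by blast+
  show ?thesis
    using partB[OF assms(1) assms(3) assms(2) assms(4) assms(5) A1 A2] by simp
qed

end
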